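(* Let $0<a\le b\le 1$ be constants, let $\mathcal{T}=\{t_1,\dots,t_K\}\subset\mathbb{R}^t$ be finite, let $f,g:\mathcal{T}\to\mathbb{R}$ be finite-valued, let $p$ be a probability mass function on $\mathcal{T}$, and let $\hat p_n$ be the empirical mass function of i.i.d. observations $T_1,\dots,T_n$ with mass function $p$. Put $\mathcal{W}=[1/b,1/a]^K$, $$\beta(w)=\frac{\sum_{k=1}^K w_k f(t_k)p(t_k)}{\sum_{k=1}^K w_k g(t_k)p(t_k)},\qquad \hat\beta_n(w)=\frac{\sum_{k=1}^K w_k f(t_k)\hat p_n(t_k)}{\sum_{k=1}^K w_k g(t_k)\hat p_n(t_k)},$$ $\beta^H=\sup_{\mathcal{W}}\beta$, $\beta^L=\inf_{\mathcal{W}}\beta$, $\hat\beta^H_n=\sup_{\mathcal{W}}\hat\beta_n$, $\hat\beta^L_n=\inf_{\mathcal{W}}\hat\beta_n$. Assume: (R1) for all $k$ and $m\in\{L,H\}$, $f(t_k)/g(t_k)\neq\beta^m$, and for all sufficiently large $n$, $f(t_k)/g(t_k)\neq\hat\beta^m_n$ almost surely; (R2) there is a constant $c>0$ such that for all $w\in\mathcal{W}$ and all sufficiently large $n$, $\sum_k w_k g(t_k)p(t_k)\ge c$ and, with probability one, $\sum_k w_k g(t_k)\hat p_n(t_k)\ge c$. For $m=L,H$, let $w^m$ be the unique population optimizer ($\beta(w^m)=\beta^m$) and $\hat w^m$ the (for large $n$, almost surely unique) sample optimizer ($\hat\beta_n(\hat w^m)=\hat\beta^m_n$). Suppose $\sigma^2:\mathcal{W}\to\mathbb{R}$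 is continuous and there exist random functions $\hat\sigma^2_n$ on $\mathcal{W}$ such that $\sup_{w\in\mathcal{W}}|\hat\sigma^2_n(w)-\sigma^2(w)|\to 0$ with probability one. Then $\hat\sigma^2_n(\hat w^m)\to\sigma^2(w^m)$ with probability one, for $m=L,H$.
   Context: Motivating setting: individuals are selected into a sample with indicator $S_i$, with $P(S_i=1\mid D_i)=1/\lambda_0(D_i)$, and it is assumed that $1\le 1/b\le\lambda_0(D_i)\le 1/a<\infty$ almost surely; $T_i$ has finite support $\mathcal{T}$ among selected units. In the paper $\sigma^2(w)$ is the asymptotic variance of $\sqrt n(\hat\beta_n(w)-\beta(w))$ and $\hat\sigma_n^2$ is an estimator of it. *)

theory Defs
  imports "HOL-Probability.Probability"
begin

text \<open>The weight box W = [1/b, 1/a]^K, weights indexed by a finite type 'k with K = CARD('k).\<close>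
definition Wbox :: "real \<Rightarrow> real \<Rightarrow> (real^'k::finite) set" where
  "Wbox a b = {w. \<forall>k. 1 / b \<le> w $ k \<and> w $ k \<le> 1 / a}"

definition ratio_beta ::
  "('k::finite \<Rightarrow> 'a) \<Rightarrow> ('a \<Rightarrow> real) \<Rightarrow> ('a \<Rightarrow> real) \<Rightarrow> ('a \<Rightarrow> real) \<Rightarrow> real^'k \<Rightarrow> real" where
  "ratio_beta t f g q w =
     (\<Sum>k\<in>UNIV. w $ k * f (t k) * q (t k)) / (\<Sum>k\<in>UNIV. w $ k * g (t k) * q (t k))"

text \<open>Empirical mass function of the first n observations T_0, ..., T_(n-1).\<close>
definition emp_pmf :: "(nat \<Rightarrow> 'o \<Rightarrow> 'a) \<Rightarrow> nat \<Rightarrow> 'o \<Rightarrow> 'a \<Rightarrow> real" where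
  "emp_pmf T n \<omega> x = real (card {i. i < n \<and> T i \<omega> = x}) / real n"

end

theory Submission
  imports Defs
begin


context prob_space begin

lemma emp_sum:
  fixes n :: nat
  shows "(\<Sum>i\<in>{0..<n}. (if T i \<omega> = x then 1 else 0 :: real)) = real (card {i. i < n \<and> T i \<omega> = x})"
proof -
  have "{i. i < n \<and> T i \<omega> = x} = {0..<n} \<inter> {i. T i \<omega> = x}" by auto
  then show ?thesis by (simp add: sum.If_cases)
qed

lemma hoeff_ind:
  fixes T :: "nat \<Rightarrow> 'a \<Rightarrow> 'b"
  assumes T_meas: "\<And>i. T i \<in> M \<rightarrow>\<^sub>M count_space UNIV"
    and indep: "indep_vars (\<lambda>_. count_space UNIV) T UNIV"
    and distr: "\<And>i. prob {\<omega>\<in>space M. T i \<omega> = x} = P"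
    and e: "\<epsilon> > 0" and n: "n > 0"
  shows "prob {\<omega>\<in>space M. \<bar>emp_pmf T n \<omega> x - P\<bar> \<ge> \<epsilon>} \<le> 2 * exp (-2 * \<epsilon>\<^sup>2) ^ n"
proof -
  define X where "X = (\<lambda>i \<omega>. if T i \<omega> = x then 1 else 0 :: real)"
  have meas: "{\<omega>\<in>space M. T i \<omega> = x} \<in> events" for i
    using T_meas[of i] by measurable
  have EX: "expectation (X i) = P" for i
  proof -
    have "expectation (X i) = expectation (indicator {\<omega>\<in>space M. T i \<omega> = x})"
      by (intro Bochner_Integration.integral_cong) (auto simp: X_def indicator_def)
    also have "\<dots> = P" using meas[of i] distr[of i] by simp
    finally show ?thesis .
  qed
  have ind: "indep_vars (\<lambda>_. borel) X {0..<n}"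
    unfolding X_def
    by (rule indep_vars_compose2[where Y="\<lambda>i y. if y = x then 1 else 0::real", OF indep_vars_subset[OF indep]]) auto
  interpret H: Hoeffding_ineq M "{0..<n}" X "\<lambda>_. 0" "\<lambda>_. 1" "real n * P"
  proof unfold_locales
    show "AE \<omega> in M. X i \<omega> \<in> {0..1}" for i by (auto simp: X_def)
  qed (auto simp: ind EX)
  have "prob {\<omega>\<in>space M. \<bar>(\<Sum>i\<in>{0..<n}. X i \<omega>) - real n * P\<bar> \<ge> \<epsilon> * n}
       \<le> 2 * exp (-2 * (\<epsilon> * n)\<^sup>2 / (\<Sum>i\<in>{0..<n}. (1 - 0)\<^sup>2))"
    using n e by (intro H.Hoeffding_ineq_abs_ge) auto
  also have "-2 * (\<epsilon> * n)\<^sup>2 / (\<Sum>i\<in>{0..<n}. (1 - 0 :: real)\<^sup>2) = (-2 * \<epsilon>\<^sup>2) * n"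
    using n by (simp add: power2_eq_square)
  also have "exp ((-2 * \<epsilon>\<^sup>2) * n) = exp (-2 * \<epsilon>\<^sup>2) ^ n"
    by (metis exp_of_nat_mult mult.commute)
  also have "{\<omega>\<in>space M. \<bar>(\<Sum>i\<in>{0..<n}. X i \<omega>) - real n * P\<bar> \<ge> \<epsilon> * n}
           = {\<omega>\<in>space M. \<bar>emp_pmf T n \<omega> x - P\<bar> \<ge> \<epsilon>}"
  proof -
    have "\<bar>c - real n * P\<bar> \<ge> \<epsilon> * n \<longleftrightarrow> \<bar>c / n - P\<bar> \<ge> \<epsilon>" for c
    proof -
      have "c - real n * P = n * (c / n - P)" using n by (simp add: field_simps)
      then have "\<bar>c - real n * P\<bar> = n * \<bar>c / n - P\<bar>" by (simp add: abs_mult)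
      then show ?thesis using n by (simp add: mult.commute)
    qed
    then show ?thesis unfolding X_def emp_pmf_def emp_sum by auto
  qed
  finally show ?thesis .
qed


lemma slln_ind:
  fixes T :: "nat \<Rightarrow> 'a \<Rightarrow> 'b"
  assumes T_meas: "\<And>i. T i \<in> M \<rightarrow>\<^sub>M count_space UNIV"
    and indep: "indep_vars (\<lambda>_. count_space UNIV) T UNIV"
    and distr: "\<And>i. prob {\<omega>\<in>space M. T i \<omega> = x} = P"
  shows "AE \<omega> in M. (\<lambda>n. emp_pmf T n \<omega> x) \<longlonglongrightarrow> P"
proof -
  have empm: "(\<lambda>\<omega>. emp_pmf T n \<omega> x) \<in> borel_measurable M" for n
  proof -
    have "(\<lambda>\<omega>. emp_pmf T n \<omega> x) = (\<lambda>\<omega>. (\<Sum>i\<in>{0..<n}. (if T i \<omega> = x then 1 else 0 :: real)) / n)"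
      unfolding emp_pmf_def emp_sum by simp
    also have "\<dots> \<in> borel_measurable M"
    proof -
      have [measurable]: "T i \<in> M \<rightarrow>\<^sub>M count_space UNIV" for i by (rule T_meas)
      show ?thesis by measurable
    qed
    finally show ?thesis .
  qed
  have ev: "AE \<omega> in M. eventually (\<lambda>n. \<bar>emp_pmf T n \<omega> x - P\<bar> < \<epsilon>) sequentially"
    if e: "\<epsilon> > 0" for \<epsilon>
  proof -
    define A where "A n = {\<omega>\<in>space M. \<bar>emp_pmf T n \<omega> x - P\<bar> \<ge> \<epsilon>}" for n
    have Am: "A n \<in> events" for n
      unfolding A_def using empm[of n] by measurable
    define r where "r = exp (-2 * \<epsilon>\<^sup>2)"
    have r: "0 \<le> r" "r < 1" using e by (auto simp: r_def)
    have bnd: "norm (measure M (A n)) \<le> 2 * r ^ n" for n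
    proof (cases "n = 0")
      case True
      from True have "2 * r^n = 2" by simp
      moreover have "norm (prob (A n)) \<le> 1" by simp
      ultimately show ?thesis by linarith
    next
      case False
      then show ?thesis unfolding A_def r_def
        using hoeff_ind[OF T_meas indep distr e] by simp
    qed
    have "summable (\<lambda>n. 2 * r ^ n)"
      using r by (intro summable_mult summable_geometric) auto
    then have "summable (\<lambda>n. measure M (A n))"
      by (rule summable_comparison_test[rotated]) (use bnd in blast)
    then have "AE \<omega> in M. eventually (\<lambda>n. \<omega> \<in> space M - A n) sequentially"
      using Am by (intro borel_cantelli_AE1) (auto simp: emeasure_eq_measure)
    then show ?thesis
    proof (rule AE_mp, intro AE_I2 impI)
      fix \<omega> assume "\<omega> \<in> space M" "eventually (\<lambda>n. \<omega> \<in> space M - A n) sequentially"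
      then show "eventually (\<lambda>n. \<bar>emp_pmf T n \<omega> x - P\<bar> < \<epsilon>) sequentially"
        by (auto simp: A_def not_le elim!: eventually_mono)
    qed
  qed
  have "AE \<omega> in M. \<forall>m::nat. eventually (\<lambda>n. \<bar>emp_pmf T n \<omega> x - P\<bar> < inverse (real (Suc m))) sequentially"
    unfolding AE_all_countable by (intro allI ev) simp
  then show ?thesis
  proof (rule AE_mp, intro AE_I2 impI)
    fix \<omega> assume H: "\<forall>m::nat. eventually (\<lambda>n. \<bar>emp_pmf T n \<omega> x - P\<bar> < inverse (real (Suc m))) sequentially"
    show "(\<lambda>n. emp_pmf T n \<omega> x) \<longlonglongrightarrow> P"
    proof (rule tendstoI)
      fix r :: real assume "r > 0"
      then obtain m where m: "inverse (real (Suc m)) < r" using reals_Archimedean by blast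
      show "eventually (\<lambda>n. dist (emp_pmf T n \<omega> x) P < r) sequentially"
        using H[rule_format, of m] by (rule eventually_mono) (use m in \<open>auto simp: dist_real_def\<close>)
    qed
  qed
qed

end


lemma argmin_conv:
  fixes W :: "'a::metric_space set" and \<beta> :: "'a \<Rightarrow> real" and \<beta>h :: "nat \<Rightarrow> 'a \<Rightarrow> real"
  assumes W: "compact W" and cont: "continuous_on W \<beta>"
    and w0: "w0 \<in> W" "\<beta> w0 = Inf (\<beta> ` W)" "\<And>w. w \<in> W \<Longrightarrow> \<beta> w = Inf (\<beta> ` W) \<Longrightarrow> w = w0"
    and unif: "\<And>e. e > 0 \<Longrightarrow> eventually (\<lambda>n. \<forall>w\<in>W. \<bar>\<beta>h n w - \<beta> w\<bar> < e) sequentially"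
    and wh: "eventually (\<lambda>n. wh n \<in> W \<and> \<beta>h n (wh n) = Inf (\<beta>h n ` W)) sequentially"
  shows "wh \<longlonglongrightarrow> w0"
proof (rule tendstoI)
  fix \<epsilon> :: real assume e: "\<epsilon> > 0"
  define K where "K = W - ball w0 \<epsilon>"
  have bdd: "bdd_below (\<beta> ` W)"
    using compact_continuous_image[OF cont W] by (intro bounded_imp_bdd_below compact_imp_bounded)
  show "eventually (\<lambda>n. dist (wh n) w0 < \<epsilon>) sequentially"
  proof (cases "K = {}")
    case True
    show ?thesis using wh
      by (rule eventually_mono) (use True in \<open>auto simp: K_def dist_commute\<close>)
  next
    case False
    have "compact K" unfolding K_def using W by (intro compact_diff) auto
    then obtain wk where wk: "wk \<in> K" "\<And>y. y \<in> K \<Longrightarrow> \<beta> wk \<le> \<beta> y"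
      using continuous_attains_inf[OF _ False continuous_on_subset[OF cont]] K_def by blast
    have "wk \<in> W" "wk \<noteq> w0" using wk e by (auto simp: K_def)
    have "\<beta> wk \<ge> \<beta> w0" using w0(2) \<open>wk \<in> W\<close> bdd by (simp add: cInf_lower)
    moreover have "\<beta> wk \<noteq> \<beta> w0" using w0 \<open>wk \<in> W\<close> \<open>wk \<noteq> w0\<close> by metis
    ultimately have dpos: "\<beta> wk - \<beta> w0 > 0" by linarith
    define \<delta> where "\<delta> = \<beta> wk - \<beta> w0"
    have d2: "\<delta>/2 > 0" using dpos by (simp add: \<delta>_def)
    show ?thesis using unif[OF d2] wh
    proof (eventually_elim)
      case (elim n)
      then have U: "\<forall>w\<in>W. \<bar>\<beta>h n w - \<beta> w\<bar> < \<delta>/2" and whW: "wh n \<in> W"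
        and whI: "\<beta>h n (wh n) = Inf (\<beta>h n ` W)" by auto
      have "bdd_below (\<beta>h n ` W)"
      proof (rule bdd_belowI2)
        fix w assume "w \<in> W"
        then have "\<beta> w0 \<le> \<beta> w" using w0(2) bdd by (simp add: cInf_lower)
        moreover have "\<bar>\<beta>h n w - \<beta> w\<bar> < \<delta>/2" using U \<open>w \<in> W\<close> by blast
        ultimately show "\<beta> w0 - \<delta>/2 \<le> \<beta>h n w" by arith
      qed
      then have "\<beta>h n (wh n) \<le> \<beta>h n w0" using whI w0(1) by (simp add: cInf_lower)
      moreover have "\<beta>h n w0 < \<beta> w0 + \<delta>/2"
      proof -
        have "\<bar>\<beta>h n w0 - \<beta> w0\<bar> < \<delta>/2" using U w0(1) by blast
        then show ?thesis by arith
      qed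
      ultimately have "\<beta>h n (wh n) < \<beta> w0 + \<delta>/2" by linarith
      show "dist (wh n) w0 < \<epsilon>"
      proof (rule ccontr)
        assume "\<not> dist (wh n) w0 < \<epsilon>"
        then have "wh n \<in> K" using whW by (auto simp: K_def dist_commute)
        then have "\<beta> wk \<le> \<beta> (wh n)" by (rule wk(2))
        moreover have "\<beta>h n (wh n) > \<beta> (wh n) - \<delta>/2"
        proof -
          have "\<bar>\<beta>h n (wh n) - \<beta> (wh n)\<bar> < \<delta>/2" using U whW by blast
          then show ?thesis by arith
        qed
        ultimately show False using \<open>\<beta>h n (wh n) < \<beta> w0 + \<delta>/2\<close> using \<delta>_def by argo
      qed
    qed
  qed
qed

lemma unif_compose:
  fixes W :: "'a::metric_space set" and S :: "nat \<Rightarrow> 'a \<Rightarrow> real"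
  assumes U: "uniform_limit W S \<sigma> sequentially" and cont: "continuous_on W \<sigma>"
    and w0: "w0 \<in> W" and lim: "wh \<longlonglongrightarrow> w0" and ev: "eventually (\<lambda>n. wh n \<in> W) sequentially"
  shows "(\<lambda>n. S n (wh n)) \<longlonglongrightarrow> \<sigma> w0"
proof -
  have 1: "(\<lambda>n. \<sigma> (wh n)) \<longlonglongrightarrow> \<sigma> w0"
    by (rule continuous_on_tendsto_compose[OF cont lim w0 ev])
  have 2: "(\<lambda>n. S n (wh n) - \<sigma> (wh n)) \<longlonglongrightarrow> 0"
  proof (rule tendstoI)
    fix e :: real assume "e > 0"
    with U have "eventually (\<lambda>n. \<forall>x\<in>W. dist (S n x) (\<sigma> x) < e) sequentially"
      by (simp add: uniform_limit_iff)
    then show "eventually (\<lambda>n. dist (S n (wh n) - \<sigma> (wh n)) 0 < e) sequentially"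
      using ev by eventually_elim (auto simp: dist_real_def)
  qed
  have "(\<lambda>n. (S n (wh n) - \<sigma> (wh n)) + \<sigma> (wh n)) \<longlonglongrightarrow> 0 + \<sigma> w0"
    by (intro tendsto_add 1 2)
  then show ?thesis by simp
qed

lemma Inf_uminus_real: "Inf (uminus ` (S :: real set)) = - Sup S"
  by (simp add: Inf_real_def image_image)

lemma ratio_bound:
  fixes Nq Np Dq Dp x BN c :: real
  assumes c: "c > 0" "Dq \<ge> c" "Dp \<ge> c"
    and x: "\<bar>Nq - Np\<bar> \<le> x" "\<bar>Dq - Dp\<bar> \<le> x" and BN: "\<bar>Np\<bar> \<le> BN"
  shows "\<bar>Nq / Dq - Np / Dp\<bar> \<le> x / c + BN * x / (c * c)"
proof -
  have pos: "Dq > 0" "Dp > 0" using c by auto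
  have eq: "Nq / Dq - Np / Dp = (Nq - Np) / Dq + Np * (Dp - Dq) / (Dq * Dp)"
    using pos by (simp add: field_simps)
  have x0: "x \<ge> 0" using x(1) by linarith
  have 1: "\<bar>(Nq - Np) / Dq\<bar> \<le> x / c"
  proof -
    have "\<bar>(Nq - Np) / Dq\<bar> = \<bar>Nq - Np\<bar> / Dq" using pos by simp
    also have "\<dots> \<le> x / Dq" using x(1) pos by (simp add: divide_right_mono)
    also have "\<dots> \<le> x / c" using x0 c by (simp add: divide_left_mono)
    finally show ?thesis .
  qed
  have 2: "\<bar>Np * (Dp - Dq) / (Dq * Dp)\<bar> \<le> BN * x / (c * c)"
  proof -
    have "\<bar>Np * (Dp - Dq) / (Dq * Dp)\<bar> = \<bar>Np\<bar> * \<bar>Dp - Dq\<bar> / (Dq * Dp)" using pos by (simp add: abs_mult)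
    also have "\<dots> \<le> BN * x / (Dq * Dp)"
      using pos BN x(2) by (intro divide_right_mono mult_mono) (auto simp: abs_minus_commute)
    also have "\<dots> \<le> BN * x / (c * c)"
      using pos c BN x0 by (intro divide_left_mono mult_mono) auto
    finally show ?thesis .
  qed
  show ?thesis unfolding eq using 1 2 abs_triangle_ineq[of "(Nq - Np) / Dq" "Np * (Dp - Dq) / (Dq * Dp)"]
    by (meson add_mono order_trans)
qed



lemma sum_diff_bound:
  fixes w :: "real^'k::finite" and h :: "'k \<Rightarrow> real" and Q P :: "'k \<Rightarrow> real"
  assumes "\<And>k. \<bar>w $ k\<bar> \<le> B" "\<And>k. \<bar>h k\<bar> \<le> H k"
  shows "\<bar>(\<Sum>k\<in>UNIV. w $ k * h k * Q k) - (\<Sum>k\<in>UNIV. w $ k * h k * P k)\<bar>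
         \<le> B * (\<Sum>k\<in>UNIV. H k * \<bar>Q k - P k\<bar>)"
proof -
  have "\<bar>(\<Sum>k\<in>UNIV. w $ k * h k * Q k) - (\<Sum>k\<in>UNIV. w $ k * h k * P k)\<bar>
        = \<bar>\<Sum>k\<in>UNIV. w $ k * h k * (Q k - P k)\<bar>"
    by (simp add: sum_subtractf[symmetric] algebra_simps)
  also have "\<dots> \<le> (\<Sum>k\<in>UNIV. \<bar>w $ k * h k * (Q k - P k)\<bar>)" by (rule sum_abs)
  also have "\<dots> \<le> (\<Sum>k\<in>UNIV. B * (H k * \<bar>Q k - P k\<bar>))"
  proof (rule sum_mono)
    fix k
    have B0: "B \<ge> 0" using assms(1)[of k] by linarith
    have H0: "H k \<ge> 0" using assms(2)[of k] by linarith
    have "\<bar>w $ k * h k * (Q k - P k)\<bar> = \<bar>w $ k\<bar> * (\<bar>h k\<bar> * \<bar>Q k - P k\<bar>)" by (simp add: abs_mult)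
    also have "\<dots> \<le> B * (H k * \<bar>Q k - P k\<bar>)"
      using assms B0 H0 by (intro mult_mono) (auto intro: mult_right_mono)
    finally show "\<bar>w $ k * h k * (Q k - P k)\<bar> \<le> B * (H k * \<bar>Q k - P k\<bar>)" .
  qed
  also have "\<dots> = B * (\<Sum>k\<in>UNIV. H k * \<bar>Q k - P k\<bar>)" by (simp add: sum_distrib_left)
  finally show ?thesis .
qed

lemma ratio_unif:
  fixes t :: "'k::finite \<Rightarrow> 'a" and W :: "(real^'k) set"
  assumes c: "c > 0"
    and WB: "\<And>w k. w \<in> W \<Longrightarrow> \<bar>w $ k\<bar> \<le> B"
    and Dp: "\<And>w. w \<in> W \<Longrightarrow> (\<Sum>k\<in>UNIV. w $ k * g (t k) * P (t k)) \<ge> c"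
    and Dq: "eventually (\<lambda>n. \<forall>w\<in>W. (\<Sum>k\<in>UNIV. w $ k * g (t k) * Q n (t k)) \<ge> c) sequentially"
    and lim: "\<And>k. (\<lambda>n. Q n (t k)) \<longlonglongrightarrow> P (t k)"
    and e: "e > 0"
  shows "eventually (\<lambda>n. \<forall>w\<in>W. \<bar>ratio_beta t f g (Q n) w - ratio_beta t f g P w\<bar> < e) sequentially"
proof -
  define H where "H k = \<bar>f (t k)\<bar> + \<bar>g (t k)\<bar>" for k
  define en where "en n = (\<Sum>k\<in>UNIV. H k * \<bar>Q n (t k) - P (t k)\<bar>)" for n
  define BN where "BN = B * (\<Sum>k\<in>UNIV. H k * \<bar>P (t k)\<bar>)"
  define C where "C = B / c + BN * B / (c * c)"
  have "(\<lambda>n. en n) \<longlonglongrightarrow> (\<Sum>k\<in>UNIV. H k * \<bar>P (t k) - P (t k)\<bar>)"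
    unfolding en_def by (intro tendsto_intros lim)
  then have en0: "en \<longlonglongrightarrow> 0" by simp
  have "(\<lambda>n. C * en n) \<longlonglongrightarrow> C * 0" by (intro tendsto_intros en0)
  then have "eventually (\<lambda>n. dist (C * en n) 0 < e) sequentially"
    using e by (simp add: tendsto_iff)
  then show ?thesis using Dq
  proof eventually_elim
    case (elim n)
    show ?case
    proof
      fix w assume w: "w \<in> W"
      have Hf: "\<bar>f (t k)\<bar> \<le> H k" and Hg: "\<bar>g (t k)\<bar> \<le> H k" for k by (auto simp: H_def)
      have xN: "\<bar>(\<Sum>k\<in>UNIV. w $ k * f (t k) * Q n (t k)) - (\<Sum>k\<in>UNIV. w $ k * f (t k) * P (t k))\<bar> \<le> B * en n"
        unfolding en_def by (rule sum_diff_bound[where h="\<lambda>k. f (t k)"]) (use WB[OF w] Hf in auto)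
      have xD: "\<bar>(\<Sum>k\<in>UNIV. w $ k * g (t k) * Q n (t k)) - (\<Sum>k\<in>UNIV. w $ k * g (t k) * P (t k))\<bar> \<le> B * en n"
        unfolding en_def by (rule sum_diff_bound[where h="\<lambda>k. g (t k)"]) (use WB[OF w] Hg in auto)
      have bN: "\<bar>(\<Sum>k\<in>UNIV. w $ k * f (t k) * P (t k))\<bar> \<le> BN"
      proof -
        have "\<bar>(\<Sum>k\<in>UNIV. w $ k * f (t k) * P (t k)) - (\<Sum>k\<in>UNIV. w $ k * f (t k) * (\<lambda>_. 0) k)\<bar> \<le> B * (\<Sum>k\<in>UNIV. H k * \<bar>P (t k) - 0\<bar>)"
          by (rule sum_diff_bound[where h="\<lambda>k. f (t k)"]) (use WB[OF w] Hf in auto)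
        then show ?thesis by (simp add: BN_def)
      qed
      have "\<bar>ratio_beta t f g (Q n) w - ratio_beta t f g P w\<bar> \<le> B * en n / c + BN * (B * en n) / (c * c)"
        unfolding ratio_beta_def
        by (rule ratio_bound[OF c _ _ xN xD bN]) (use elim w Dp in auto)
      also have "\<dots> = C * en n" by (simp add: C_def algebra_simps)
      also have "\<dots> < e" using elim(1) by (simp add: dist_real_def)
      finally show "\<bar>ratio_beta t f g (Q n) w - ratio_beta t f g P w\<bar> < e" .
    qed
  qed
qed

lemma Wbox_cbox: "(Wbox a b :: (real^'k::finite) set) = cbox (\<chi> i. 1 / b) (\<chi> i. 1 / a)"
  by (auto simp: Wbox_def mem_box_cart)

lemma Wbox_compact: "compact (Wbox a b)"
  by (simp add: Wbox_cbox)

lemma Wbox_bound: "0 < a \<Longrightarrow> a \<le> b \<Longrightarrow> w \<in> Wbox a b \<Longrightarrow> \<bar>w $ k\<bar> \<le> 1 / a"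
proof -
  assume "0 < a" "a \<le> b" "w \<in> Wbox a b"
  then have "1 / b \<le> w $ k" "w $ k \<le> 1 / a" "1 / b > 0" by (auto simp: Wbox_def)
  then show ?thesis by linarith
qed

lemma ratio_cont:
  assumes c: "c > 0" and Dp: "\<And>w. w \<in> W \<Longrightarrow> (\<Sum>k\<in>UNIV. w $ k * g (t k) * P (t k)) \<ge> c"
  shows "continuous_on W (ratio_beta t f g P)"
  unfolding ratio_beta_def
proof (intro continuous_on_divide)
  show "\<forall>x\<in>W. (\<Sum>k\<in>UNIV. x $ k * g (t k) * P (t k)) \<noteq> 0" using Dp c by force
qed (intro continuous_intros)+

theorem proposition1:
  fixes M :: "'o measure"
    and a b :: real
    and t :: "'k::finite \<Rightarrow> real^'d::finite"
    and f g p :: "real^'d \<Rightarrow> real"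
    and T :: "nat \<Rightarrow> 'o \<Rightarrow> real^'d"
    and wL wH :: "real^'k"
    and whL whH :: "nat \<Rightarrow> 'o \<Rightarrow> real^'k"
    and \<sigma>2 :: "real^'k \<Rightarrow> real"
    and \<sigma>2hat :: "nat \<Rightarrow> 'o \<Rightarrow> real^'k \<Rightarrow> real"
  defines "W \<equiv> (Wbox a b :: (real^'k) set)"
    and "\<beta> \<equiv> ratio_beta t f g p"
    and "\<beta>hat \<equiv> (\<lambda>n \<omega>. ratio_beta t f g (emp_pmf T n \<omega>))"
    and "\<beta>H \<equiv> Sup (ratio_beta t f g p ` Wbox a b)"
    and "\<beta>L \<equiv> Inf (ratio_beta t f g p ` Wbox a b)"
    and "\<beta>hatH \<equiv> (\<lambda>n \<omega>. Sup (ratio_beta t f g (emp_pmf T n \<omega>) ` Wbox a b))"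
    and "\<beta>hatL \<equiv> (\<lambda>n \<omega>. Inf (ratio_beta t f g (emp_pmf T n \<omega>) ` Wbox a b))"
  assumes M: "prob_space M"
    and ab: "0 < a" "a \<le> b" "b \<le> 1"
    and t_inj: "inj t"
    and p_nonneg: "\<And>x. p x \<ge> 0"
    and p_sum: "(\<Sum>k\<in>UNIV. p (t k)) = 1"
    and T_meas: "\<And>i. T i \<in> M \<rightarrow>\<^sub>M count_space UNIV"
    and T_indep: "prob_space.indep_vars M (\<lambda>_. count_space UNIV) T UNIV"
    and T_distr: "\<And>i k. measure M {\<omega> \<in> space M. T i \<omega> = t k} = p (t k)"
    and R1_pop: "\<And>k. f (t k) / g (t k) \<noteq> \<beta>L \<and> f (t k) / g (t k) \<noteq> \<beta>H"
    and R1_samp: "\<exists>N. \<forall>n\<ge>N. AE \<omega> in M. \<forall>k.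
                    f (t k) / g (t k) \<noteq> \<beta>hatL n \<omega> \<and> f (t k) / g (t k) \<noteq> \<beta>hatH n \<omega>"
    and R2: "\<exists>c>0. (\<forall>w\<in>W. (\<Sum>k\<in>UNIV. w $ k * g (t k) * p (t k)) \<ge> c) \<and>
               (\<exists>N. \<forall>n\<ge>N. AE \<omega> in M. \<forall>w\<in>W.
                  (\<Sum>k\<in>UNIV. w $ k * g (t k) * emp_pmf T n \<omega> (t k)) \<ge> c)"
    and wL: "wL \<in> W" "\<beta> wL = \<beta>L" "\<And>w. w \<in> W \<Longrightarrow> \<beta> w = \<beta>L \<Longrightarrow> w = wL"
    and wH: "wH \<in> W" "\<beta> wH = \<beta>H" "\<And>w. w \<in> W \<Longrightarrow> \<beta> w = \<beta>H \<Longrightarrow> w = wH"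
    and whL: "\<exists>N. \<forall>n\<ge>N. AE \<omega> in M. whL n \<omega> \<in> W \<and> \<beta>hat n \<omega> (whL n \<omega>) = \<beta>hatL n \<omega> \<and>
                 (\<forall>w\<in>W. \<beta>hat n \<omega> w = \<beta>hatL n \<omega> \<longrightarrow> w = whL n \<omega>)"
    and whH: "\<exists>N. \<forall>n\<ge>N. AE \<omega> in M. whH n \<omega> \<in> W \<and> \<beta>hat n \<omega> (whH n \<omega>) = \<beta>hatH n \<omega> \<and>
                 (\<forall>w\<in>W. \<beta>hat n \<omega> w = \<beta>hatH n \<omega> \<longrightarrow> w = whH n \<omega>)"
    and \<sigma>_cont: "continuous_on W \<sigma>2"
    and \<sigma>hat_unif: "AE \<omega> in M. uniform_limit W (\<lambda>n. \<sigma>2hat n \<omega>) \<sigma>2 sequentially"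
  shows "(AE \<omega> in M. (\<lambda>n. \<sigma>2hat n \<omega> (whL n \<omega>)) \<longlonglongrightarrow> \<sigma>2 wL) \<and>
         (AE \<omega> in M. (\<lambda>n. \<sigma>2hat n \<omega> (whH n \<omega>)) \<longlonglongrightarrow> \<sigma>2 wH)"
proof -
  interpret P: prob_space M by (rule M)
  note defs = W_def \<beta>_def \<beta>hat_def \<beta>H_def \<beta>L_def \<beta>hatH_def \<beta>hatL_def
  define W0 where "W0 = (Wbox a b :: (real^'k) set)"
  define B0 where "B0 = ratio_beta t f g p"
  have Wc: "compact W0" unfolding W0_def by (rule Wbox_compact)
  have WB: "\<And>w k. w \<in> W0 \<Longrightarrow> \<bar>w $ k\<bar> \<le> 1 / a" unfolding W0_def using Wbox_bound ab by blast
  obtain c N2 where c: "c > 0" and Dp: "\<And>w. w \<in> W0 \<Longrightarrow> (\<Sum>k\<in>UNIV. w $ k * g (t k) * p (t k)) \<ge> c"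
    and Dq: "\<forall>n\<ge>N2. AE \<omega> in M. \<forall>w\<in>W0. (\<Sum>k\<in>UNIV. w $ k * g (t k) * emp_pmf T n \<omega> (t k)) \<ge> c"
    using R2 unfolding defs W0_def by blast
  have cont: "continuous_on W0 B0" unfolding B0_def by (rule ratio_cont[where g=g and t=t and P=p, OF c Dp])
  have slln: "AE \<omega> in M. \<forall>k\<in>UNIV. (\<lambda>n. emp_pmf T n \<omega> (t k)) \<longlonglongrightarrow> p (t k)"
    by (rule AE_finite_allI) (auto intro: P.slln_ind[OF T_meas T_indep] T_distr)
  have AEev: "AE \<omega> in M. eventually (\<lambda>n. Q n \<omega>) sequentially"
    if "\<forall>n\<ge>N. AE \<omega> in M. Q n \<omega>" for Q :: "nat \<Rightarrow> 'o \<Rightarrow> bool" and N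
  proof -
    have "AE \<omega> in M. \<forall>n. N \<le> n \<longrightarrow> Q n \<omega>"
      unfolding AE_all_countable using that by auto
    then show ?thesis by (rule AE_mp) (auto intro!: AE_I2 simp: eventually_sequentially)
  qed
  obtain N3 where N3: "\<forall>n\<ge>N3. AE \<omega> in M. whL n \<omega> \<in> W0 \<and> ratio_beta t f g (emp_pmf T n \<omega>) (whL n \<omega>) = Inf (ratio_beta t f g (emp_pmf T n \<omega>) ` W0) \<and>
                 (\<forall>w\<in>W0. ratio_beta t f g (emp_pmf T n \<omega>) w = Inf (ratio_beta t f g (emp_pmf T n \<omega>) ` W0) \<longrightarrow> w = whL n \<omega>)"
    using whL[unfolded defs, folded W0_def] by (elim exE) (rule that)
  obtain N4 where N4: "\<forall>n\<ge>N4. AE \<omega> in M. whH n \<omega> \<in> W0 \<and> ratio_beta t f g (emp_pmf T n \<omega>) (whH n \<omega>) = Sup (ratio_beta t f g (emp_pmf T n \<omega>) ` W0) \<and>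
                 (\<forall>w\<in>W0. ratio_beta t f g (emp_pmf T n \<omega>) w = Sup (ratio_beta t f g (emp_pmf T n \<omega>) ` W0) \<longrightarrow> w = whH n \<omega>)"
    using whH[unfolded defs, folded W0_def] by (elim exE) (rule that)
  note wL' = wL[unfolded defs, folded W0_def B0_def]
  note wH' = wH[unfolded defs, folded W0_def B0_def]
  have sc: "continuous_on W0 \<sigma>2" using \<sigma>_cont unfolding defs W0_def .
  have su: "AE \<omega> in M. uniform_limit W0 (\<lambda>n. \<sigma>2hat n \<omega>) \<sigma>2 sequentially"
    using \<sigma>hat_unif unfolding defs W0_def .
  have ALL: "AE \<omega> in M. (\<forall>k\<in>UNIV. (\<lambda>n. emp_pmf T n \<omega> (t k)) \<longlonglongrightarrow> p (t k)) \<and>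
     eventually (\<lambda>n. \<forall>w\<in>W0. (\<Sum>k\<in>UNIV. w $ k * g (t k) * emp_pmf T n \<omega> (t k)) \<ge> c) sequentially \<and>
     eventually (\<lambda>n. whL n \<omega> \<in> W0 \<and> ratio_beta t f g (emp_pmf T n \<omega>) (whL n \<omega>) = Inf (ratio_beta t f g (emp_pmf T n \<omega>) ` W0) \<and>
                 (\<forall>w\<in>W0. ratio_beta t f g (emp_pmf T n \<omega>) w = Inf (ratio_beta t f g (emp_pmf T n \<omega>) ` W0) \<longrightarrow> w = whL n \<omega>)) sequentially \<and>
     eventually (\<lambda>n. whH n \<omega> \<in> W0 \<and> ratio_beta t f g (emp_pmf T n \<omega>) (whH n \<omega>) = Sup (ratio_beta t f g (emp_pmf T n \<omega>) ` W0) \<and>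
                 (\<forall>w\<in>W0. ratio_beta t f g (emp_pmf T n \<omega>) w = Sup (ratio_beta t f g (emp_pmf T n \<omega>) ` W0) \<longrightarrow> w = whH n \<omega>)) sequentially \<and>
     uniform_limit W0 (\<lambda>n. \<sigma>2hat n \<omega>) \<sigma>2 sequentially"
    using slln AEev[OF Dq] AEev[OF N3] AEev[OF N4] su by eventually_elim blast
  have det: "(\<lambda>n. \<sigma>2hat n \<omega> (whL n \<omega>)) \<longlonglongrightarrow> \<sigma>2 wL \<and> (\<lambda>n. \<sigma>2hat n \<omega> (whH n \<omega>)) \<longlonglongrightarrow> \<sigma>2 wH"
    if H: "(\<forall>k\<in>UNIV. (\<lambda>n. emp_pmf T n \<omega> (t k)) \<longlonglongrightarrow> p (t k)) \<and>
     eventually (\<lambda>n. \<forall>w\<in>W0. (\<Sum>k\<in>UNIV. w $ k * g (t k) * emp_pmf T n \<omega> (t k)) \<ge> c) sequentially \<and>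
     eventually (\<lambda>n. whL n \<omega> \<in> W0 \<and> ratio_beta t f g (emp_pmf T n \<omega>) (whL n \<omega>) = Inf (ratio_beta t f g (emp_pmf T n \<omega>) ` W0) \<and>
                 (\<forall>w\<in>W0. ratio_beta t f g (emp_pmf T n \<omega>) w = Inf (ratio_beta t f g (emp_pmf T n \<omega>) ` W0) \<longrightarrow> w = whL n \<omega>)) sequentially \<and>
     eventually (\<lambda>n. whH n \<omega> \<in> W0 \<and> ratio_beta t f g (emp_pmf T n \<omega>) (whH n \<omega>) = Sup (ratio_beta t f g (emp_pmf T n \<omega>) ` W0) \<and>
                 (\<forall>w\<in>W0. ratio_beta t f g (emp_pmf T n \<omega>) w = Sup (ratio_beta t f g (emp_pmf T n \<omega>) ` W0) \<longrightarrow> w = whH n \<omega>)) sequentially \<and>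
     uniform_limit W0 (\<lambda>n. \<sigma>2hat n \<omega>) \<sigma>2 sequentially" for \<omega>
  proof -
    define Bh where "Bh n = ratio_beta t f g (emp_pmf T n \<omega>)" for n
    from H have lim: "\<And>k. (\<lambda>n. emp_pmf T n \<omega> (t k)) \<longlonglongrightarrow> p (t k)"
      and DqE: "eventually (\<lambda>n. \<forall>w\<in>W0. (\<Sum>k\<in>UNIV. w $ k * g (t k) * emp_pmf T n \<omega> (t k)) \<ge> c) sequentially"
      and uL: "uniform_limit W0 (\<lambda>n. \<sigma>2hat n \<omega>) \<sigma>2 sequentially" by auto
    from H have evL: "eventually (\<lambda>n. whL n \<omega> \<in> W0 \<and> Bh n (whL n \<omega>) = Inf (Bh n ` W0)) sequentially"
      unfolding Bh_def by (auto elim: eventually_mono)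
    from H have evH: "eventually (\<lambda>n. whH n \<omega> \<in> W0 \<and> Bh n (whH n \<omega>) = Sup (Bh n ` W0)) sequentially"
      unfolding Bh_def by (auto elim: eventually_mono)
    have unif: "eventually (\<lambda>n. \<forall>w\<in>W0. \<bar>Bh n w - B0 w\<bar> < e) sequentially" if "e > 0" for e
      unfolding Bh_def B0_def by (rule ratio_unif[where g=g and t=t and P=p, OF c WB Dp DqE lim that])
    have convL: "(\<lambda>n. whL n \<omega>) \<longlonglongrightarrow> wL"
      by (rule argmin_conv[OF Wc cont wL' unif evL])
    have unifH: "eventually (\<lambda>n. \<forall>w\<in>W0. \<bar>(- Bh n w) - (- B0 w)\<bar> < e) sequentially" if "e > 0" for e
      using unif[OF that] by (auto elim!: eventually_mono)
    have imgB: "(\<lambda>w. - B0 w) ` W0 = uminus ` (B0 ` W0)" by (simp add: image_image)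
    have imgBh: "(\<lambda>w. - Bh n w) ` W0 = uminus ` (Bh n ` W0)" for n by (simp add: image_image)
    have wH''1: "- B0 wH = Inf ((\<lambda>w. - B0 w) ` W0)"
      unfolding imgB Inf_uminus_real using wH'(2) by simp
    have wH''2: "w = wH" if "w \<in> W0" "- B0 w = Inf ((\<lambda>w. - B0 w) ` W0)" for w
    proof -
      have "B0 w = Sup (B0 ` W0)" using that(2) unfolding imgB Inf_uminus_real by simp
      then show ?thesis using wH'(3) that(1) by blast
    qed
    note wH'' = wH''1 wH''2
    have evH': "eventually (\<lambda>n. whH n \<omega> \<in> W0 \<and> - Bh n (whH n \<omega>) = Inf ((\<lambda>w. - Bh n w) ` W0)) sequentially"
      using evH unfolding imgBh Inf_uminus_real by (rule eventually_mono) simp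
    have contH: "continuous_on W0 (\<lambda>w. - B0 w)" by (intro continuous_intros cont)
    have convH: "(\<lambda>n. whH n \<omega>) \<longlonglongrightarrow> wH"
      by (rule argmin_conv[OF Wc contH wH'(1) wH'' unifH evH'])
    show ?thesis
    proof
      show "(\<lambda>n. \<sigma>2hat n \<omega> (whL n \<omega>)) \<longlonglongrightarrow> \<sigma>2 wL"
        by (rule unif_compose[OF uL sc wL'(1) convL]) (use evL in \<open>auto elim: eventually_mono\<close>)
      show "(\<lambda>n. \<sigma>2hat n \<omega> (whH n \<omega>)) \<longlonglongrightarrow> \<sigma>2 wH"
        by (rule unif_compose[OF uL sc wH'(1) convH]) (use evH in \<open>auto elim: eventually_mono\<close>)
    qed
  qed
  have "AE \<omega> in M. (\<lambda>n. \<sigma>2hat n \<omega> (whL n \<omega>)) \<longlonglongrightarrow> \<sigma>2 wL \<and> (\<lambda>n. \<sigma>2hat n \<omega> (whH n \<omega>)) \<longlonglongrightarrow> \<sigma>2 wH"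
    using ALL by (rule AE_mp) (intro AE_I2 impI det)
  then show ?thesis by auto
qed

end
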